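(* Let $K$ be a Kan complex, $v\in K_0$ a vertex and $n\geq1$. Then the homotopy monoid $\tau_n(\mathrm{th}_0(K),v)$ (with the multiplication defined in the context) is a group, and it coincides, as a group, with the simplicial homotopy group $\pi_n(K,v)$.
   Context: A stratified simplicial set is a pair $(X,tX)$ where $X$ is a simplicial set and $tX$ is a set of simplices of $X$ (thin simplices) containing all degenerate simplices and no $0$-simplices; stratified maps are simplicial maps preserving thin simplices. For a Kan complex $K$, $\mathrm{th}_0(K)$ denotes the stratified simplicial set $(K,\bigcup_{m\ge1}K_m)$ (all simplices of positive dimension thin); it is a weak complicial set. For $n\ge1$, $\Delta[n]_t$ is $\Delta[n]$ with thin simplices the degenerate ones and $\mathrm{Id}_{[n]}$. For $k\in[n]$, $\Delta^k[n]$ is $\Delta[n]$ with thin simplices the degenerate ones and all $\alpha:[m]\to[n]$ with $\{k-1,k,k+1\}\cap[n]\subset\mathrm{Im}(\alpha)$. The product $X\circledast Y$ has underlying simplicial set $X\times Y$, with $(x,y)$ thin iff $x$ and $y$ are thin. For stratified maps $f,g:A\to X$ and an inclusion $B\hookrightarrow A$ with $f|_B=g|_B$, $f\sim_B g$ means there is a stratified map $H:A\circledast\Delta[1]_t\to X$ with $H|_{A\times\{0\}}=f$, $H|_{A\times\{1\}}=g$ and $H|_{B\circledast\Delta[1]_t}=f|_B\circ\mathrm{proj}_B$; $n$-simplices are regarded as stratified maps from $\Delta[n]$ with only degenerate simplices thin. For a weak complicial set $X$, vertex $x$, and $n\ge1$, $\tau_n(X,x)$ is the set of $\sim_{\partial\Delta[n]}$-classes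 of $n$-simplices $\alpha$ whose restriction to $\partial\Delta[n]$ is constant at $x$, with multiplication $[\alpha][\beta]=[d_n\theta]$ where $\theta:\Delta^n[n+1]\to X$ is any stratified map with $d_{n-1}\theta=\alpha$, $d_{n+1}\theta=\beta$, and $d_i\theta$ constant at $x$ for $i\notin\{n-1,n,n+1\}$; this is a monoid with unit the class of the constant simplex at $x$. *)

theory Defs
  imports "HOL-Algebra.Group"
begin

text \<open>A simplicial set is given by its sets of m-simplices and, for every monotone
  map f : [m] -> [k] (represented by a function on nat, only its values on {0..m}
  matter), the induced map X_k -> X_m, written ss_act X f m k.\<close>

record 'a sset =
  ss_sx  :: "nat \<Rightarrow> 'a set"
  ss_act :: "(nat \<Rightarrow> nat) \<Rightarrow> nat \<Rightarrow> nat \<Rightarrow> 'a \<Rightarrow> 'a"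

record 'a ssset = "'a sset" +
  ss_thin :: "nat \<Rightarrow> 'a set"

definition simp_op :: "(nat \<Rightarrow> nat) \<Rightarrow> nat \<Rightarrow> nat \<Rightarrow> bool" where
  "simp_op f m k \<longleftrightarrow> (\<forall>i j. i \<le> j \<and> j \<le> m \<longrightarrow> f i \<le> f j) \<and> (\<forall>i\<le>m. f i \<le> k)"

definition is_sset :: "('a, 'z) sset_scheme \<Rightarrow> bool" where
  "is_sset X \<longleftrightarrow>
     (\<forall>f m k x. simp_op f m k \<and> x \<in> ss_sx X k \<longrightarrow> ss_act X f m k x \<in> ss_sx X m) \<and>
     (\<forall>k x. x \<in> ss_sx X k \<longrightarrow> ss_act X id k k x = x) \<and>
     (\<forall>f g m k l x. simp_op f m k \<and> simp_op g k l \<and> x \<in> ss_sx X l \<longrightarrow>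
         ss_act X (g \<circ> f) m l x = ss_act X f m k (ss_act X g k l x)) \<and>
     (\<forall>f f' m k x. (\<forall>i\<le>m. f i = f' i) \<and> x \<in> ss_sx X k \<longrightarrow>
         ss_act X f m k x = ss_act X f' m k x)"

definition coface :: "nat \<Rightarrow> nat \<Rightarrow> nat" where
  "coface i j = (if j < i then j else Suc j)"

definition ss_face :: "('a, 'z) sset_scheme \<Rightarrow> nat \<Rightarrow> nat \<Rightarrow> 'a \<Rightarrow> 'a" where
  "ss_face X i k x = ss_act X (coface i) (k - 1) k x"

definition ss_const :: "('a, 'z) sset_scheme \<Rightarrow> nat \<Rightarrow> 'a \<Rightarrow> 'a" where
  "ss_const X m v = ss_act X (\<lambda>_. 0) m 0 v"

definition degenerate :: "('a, 'z) sset_scheme \<Rightarrow> nat \<Rightarrow> 'a \<Rightarrow> bool" where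
  "degenerate X m x \<longleftrightarrow> x \<in> ss_sx X m \<and>
     (\<exists>k<m. \<exists>\<sigma> y. simp_op \<sigma> m k \<and> \<sigma> ` {..m} = {..k} \<and> y \<in> ss_sx X k \<and>
        x = ss_act X \<sigma> m k y)"

definition kan_complex :: "'a sset \<Rightarrow> bool" where
  "kan_complex K \<longleftrightarrow> is_sset K \<and>
     (\<forall>n k (x :: nat \<Rightarrow> 'a). 1 \<le> n \<and> k \<le> n \<and>
        (\<forall>i\<le>n. i \<noteq> k \<longrightarrow> x i \<in> ss_sx K (n - 1)) \<and>
        (\<forall>i j. i < j \<and> j \<le> n \<and> i \<noteq> k \<and> j \<noteq> k \<longrightarrow>
            ss_face K i (n - 1) (x j) = ss_face K (j - 1) (n - 1) (x i))
        \<longrightarrow> (\<exists>y\<in>ss_sx K n. \<forall>i\<le>n. i \<noteq> k \<longrightarrow> ss_face K i n y = x i))"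

definition is_strat :: "'a ssset \<Rightarrow> bool" where
  "is_strat X \<longleftrightarrow> is_sset X \<and> (\<forall>m. ss_thin X m \<subseteq> ss_sx X m) \<and>
     (\<forall>m x. degenerate X m x \<longrightarrow> x \<in> ss_thin X m) \<and> ss_thin X 0 = {}"

definition strat_map :: "'a ssset \<Rightarrow> 'b ssset \<Rightarrow> (nat \<Rightarrow> 'a \<Rightarrow> 'b) \<Rightarrow> bool" where
  "strat_map X Y F \<longleftrightarrow>
     (\<forall>m x. x \<in> ss_sx X m \<longrightarrow> F m x \<in> ss_sx Y m) \<and>
     (\<forall>f m k x. simp_op f m k \<and> x \<in> ss_sx X k \<longrightarrow>
         F m (ss_act X f m k x) = ss_act Y f m k (F k x)) \<and>
     (\<forall>m x. x \<in> ss_thin X m \<longrightarrow> F m x \<in> ss_thin Y m)"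

definition mk_strat :: "'a sset \<Rightarrow> (nat \<Rightarrow> 'a set) \<Rightarrow> 'a ssset" where
  "mk_strat X T = \<lparr>ss_sx = ss_sx X, ss_act = ss_act X, ss_thin = T\<rparr>"

definition th0 :: "'a sset \<Rightarrow> 'a ssset" where
  "th0 K = mk_strat K (\<lambda>m. if m = 0 then {} else ss_sx K m)"

text \<open>The standard simplex Delta[n]: m-simplices are monotone maps [m] -> [n],
  represented as sorted lists of length m+1 with entries <= n.\<close>
definition delta :: "nat \<Rightarrow> nat list sset" where
  "delta n = \<lparr>ss_sx = (\<lambda>m. {xs. length xs = Suc m \<and> sorted xs \<and> (\<forall>i\<in>set xs. i \<le> n)}),
              ss_act = (\<lambda>f m k xs. map (\<lambda>i. xs ! f i) [0..<Suc m])\<rparr>"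

definition delta_min :: "nat \<Rightarrow> nat list ssset" where
  "delta_min n = mk_strat (delta n) (\<lambda>m. {xs. degenerate (delta n) m xs})"

definition delta_t :: "nat \<Rightarrow> nat list ssset" where
  "delta_t n = mk_strat (delta n)
     (\<lambda>m. {xs. degenerate (delta n) m xs} \<union> (if m = n then {[0..<Suc n]} else {}))"

definition delta_adm :: "nat \<Rightarrow> nat \<Rightarrow> nat list ssset" where
  "delta_adm k n = mk_strat (delta n)
     (\<lambda>m. {xs. degenerate (delta n) m xs} \<union>
          {xs \<in> ss_sx (delta n) m. {i. i \<le> n \<and> (i + 1 = k \<or> i = k \<or> i = k + 1)} \<subseteq> set xs})"

definition sprod :: "'a ssset \<Rightarrow> 'b ssset \<Rightarrow> ('a \<times> 'b) ssset" where
  "sprod X Y = \<lparr>ss_sx = (\<lambda>m. ss_sx X m \<times> ss_sx Y m),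
                ss_act = (\<lambda>f m k p. (ss_act X f m k (fst p), ss_act Y f m k (snd p))),
                ss_thin = (\<lambda>m. ss_thin X m \<times> ss_thin Y m)\<rparr>"

text \<open>an n-simplex x regarded as a map Delta[n] -> X (Yoneda)\<close>
definition yon :: "('a, 'z) sset_scheme \<Rightarrow> nat \<Rightarrow> 'a \<Rightarrow> nat \<Rightarrow> nat list \<Rightarrow> 'a" where
  "yon X n x = (\<lambda>m \<xi>. ss_act X (\<lambda>i. \<xi> ! i) m n x)"

definition bdry :: "nat \<Rightarrow> nat \<Rightarrow> nat list set" where
  "bdry n m = {\<xi> \<in> ss_sx (delta n) m. \<not> {..n} \<subseteq> set \<xi>}"

definition tau_sphere :: "'a ssset \<Rightarrow> 'a \<Rightarrow> nat \<Rightarrow> 'a set" where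
  "tau_sphere X v n = {\<alpha> \<in> ss_sx X n. \<forall>m \<xi>. \<xi> \<in> bdry n m \<longrightarrow> yon X n \<alpha> m \<xi> = ss_const X m v}"

definition tau_htpy :: "'a ssset \<Rightarrow> nat \<Rightarrow> 'a \<Rightarrow> 'a \<Rightarrow> bool" where
  "tau_htpy X n \<alpha> \<beta> \<longleftrightarrow>
     (\<exists>H. strat_map (sprod (delta_min n) (delta_t 1)) X H \<and>
        (\<forall>m \<xi>. \<xi> \<in> ss_sx (delta n) m \<longrightarrow>
            H m (\<xi>, replicate (Suc m) 0) = yon X n \<alpha> m \<xi> \<and>
            H m (\<xi>, replicate (Suc m) 1) = yon X n \<beta> m \<xi>) \<and>
        (\<forall>m \<xi> \<eta>. \<xi> \<in> bdry n m \<and> \<eta> \<in> ss_sx (delta 1) m \<longrightarrow> H m (\<xi>, \<eta>) = yon X n \<alpha> m \<xi>))"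

definition tau_cls :: "'a ssset \<Rightarrow> 'a \<Rightarrow> nat \<Rightarrow> 'a \<Rightarrow> 'a set" where
  "tau_cls X v n \<alpha> = {\<beta> \<in> tau_sphere X v n. tau_htpy X n \<alpha> \<beta>}"

definition tau_witness :: "'a ssset \<Rightarrow> 'a \<Rightarrow> nat \<Rightarrow> 'a \<Rightarrow> 'a \<Rightarrow> 'a \<Rightarrow> bool" where
  "tau_witness X v n \<alpha> \<beta> \<theta> \<longleftrightarrow> \<theta> \<in> ss_sx X (Suc n) \<and>
     strat_map (delta_adm n (Suc n)) X (yon X (Suc n) \<theta>) \<and>
     ss_face X (n - 1) (Suc n) \<theta> = \<alpha> \<and> ss_face X (Suc n) (Suc n) \<theta> = \<beta> \<and>
     (\<forall>i\<le>Suc n. i \<notin> {n - 1, n, Suc n} \<longrightarrow> ss_face X i (Suc n) \<theta> = ss_const X n v)"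

definition tau_monoid :: "'a ssset \<Rightarrow> 'a \<Rightarrow> nat \<Rightarrow> 'a set monoid" where
  "tau_monoid X v n =
     \<lparr>carrier = tau_cls X v n ` tau_sphere X v n,
      mult = (\<lambda>A B. THE C. \<exists>\<alpha>\<in>A. \<exists>\<beta>\<in>B. \<exists>\<theta>. tau_witness X v n \<alpha> \<beta> \<theta> \<and>
                                 C = tau_cls X v n (ss_face X n (Suc n) \<theta>)),
      one = tau_cls X v n (ss_const X n v)\<rparr>"

definition pi_sphere :: "'a sset \<Rightarrow> 'a \<Rightarrow> nat \<Rightarrow> 'a set" where
  "pi_sphere K v n = {x \<in> ss_sx K n. \<forall>i\<le>n. ss_face K i n x = ss_const K (n - 1) v}"

definition pi_htpy :: "'a sset \<Rightarrow> 'a \<Rightarrow> nat \<Rightarrow> 'a \<Rightarrow> 'a \<Rightarrow> bool" where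
  "pi_htpy K v n x x' \<longleftrightarrow> (\<exists>y\<in>ss_sx K (Suc n).
     ss_face K n (Suc n) y = x \<and> ss_face K (Suc n) (Suc n) y = x' \<and>
     (\<forall>i<n. ss_face K i (Suc n) y = ss_const K n v))"

definition pi_cls :: "'a sset \<Rightarrow> 'a \<Rightarrow> nat \<Rightarrow> 'a \<Rightarrow> 'a set" where
  "pi_cls K v n x = {x' \<in> pi_sphere K v n. pi_htpy K v n x x'}"

definition pi_group :: "'a sset \<Rightarrow> 'a \<Rightarrow> nat \<Rightarrow> 'a set monoid" where
  "pi_group K v n =
     \<lparr>carrier = pi_cls K v n ` pi_sphere K v n,
      mult = (\<lambda>A B. THE C. \<exists>x\<in>A. \<exists>y\<in>B. \<exists>z\<in>ss_sx K (Suc n).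
                 (\<forall>i<n - 1. ss_face K i (Suc n) z = ss_const K n v) \<and>
                 ss_face K (n - 1) (Suc n) z = x \<and> ss_face K (Suc n) (Suc n) z = y \<and>
                 C = pi_cls K v n (ss_face K n (Suc n) z)),
      one = pi_cls K v n (ss_const K n v)\<rparr>"

end

theory Submission
  imports Defs
begin


definition codeg :: "nat \<Rightarrow> nat \<Rightarrow> nat" where
  "codeg j t = (if t \<le> j then t else t - 1)"

lemma simp_op_coface: "i \<le> Suc m \<Longrightarrow> simp_op (coface i) m (Suc m)"
  by (auto simp: simp_op_def coface_def)

lemma simp_op_coface': "i \<le> k \<Longrightarrow> 1 \<le> k \<Longrightarrow> simp_op (coface i) (k - 1) k"
  by (auto simp: simp_op_def coface_def)

lemma simp_op_codeg: "j \<le> m \<Longrightarrow> simp_op (codeg j) (Suc m) m"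
  by (auto simp: simp_op_def codeg_def)

lemma simp_op_const0: "simp_op (\<lambda>_. 0) m 0"
  by (auto simp: simp_op_def)

locale sset_loc =
  fixes K :: "('a,'z) sset_scheme"
  assumes ss: "is_sset K"
begin

abbreviation "X \<equiv> ss_sx K"
abbreviation "act \<equiv> ss_act K"
abbreviation "face \<equiv> ss_face K"
definition "degen j k x = act (codeg j) (Suc k) k x"
abbreviation "cst \<equiv> ss_const K"

lemma act_closed: "simp_op f m k \<Longrightarrow> x \<in> X k \<Longrightarrow> act f m k x \<in> X m"
  using ss unfolding is_sset_def by blast

lemma act_act: "simp_op f m k \<Longrightarrow> simp_op g k l \<Longrightarrow> x \<in> X l \<Longrightarrow>
   act f m k (act g k l x) = act (g \<circ> f) m l x"
  using ss unfolding is_sset_def by metis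

lemma act_cong: "(\<And>i. i \<le> m \<Longrightarrow> f i = f' i) \<Longrightarrow> x \<in> X k \<Longrightarrow> act f m k x = act f' m k x"
  using ss unfolding is_sset_def by blast

lemma act_id: "(\<And>i. i \<le> k \<Longrightarrow> f i = i) \<Longrightarrow> x \<in> X k \<Longrightarrow> act f k k x = x"
proof -
  assume a: "\<And>i. i \<le> k \<Longrightarrow> f i = i" "x \<in> X k"
  have "act f k k x = act id k k x" by (rule act_cong) (auto simp: a)
  also have "\<dots> = x" using ss a unfolding is_sset_def by blast
  finally show ?thesis .
qed

lemma face_closed: "x \<in> X k \<Longrightarrow> i \<le> k \<Longrightarrow> 1 \<le> k \<Longrightarrow> face i k x \<in> X (k - 1)"
  unfolding ss_face_def by (rule act_closed) (auto simp: simp_op_def coface_def)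

lemma cst_closed: "v \<in> X 0 \<Longrightarrow> cst m v \<in> X m"
  unfolding ss_const_def by (rule act_closed) (auto intro: simp_op_const0)

lemma degen_closed: "x \<in> X k \<Longrightarrow> j \<le> k \<Longrightarrow> degen j k x \<in> X (Suc k)"
  unfolding degen_def by (rule act_closed) (auto intro: simp_op_codeg)

lemma face_face:
  assumes "i < j" "j \<le> k" "2 \<le> k" "x \<in> X k"
  shows "face i (k - 1) (face j k x) = face (j - 1) (k - 1) (face i k x)"
proof -
  obtain m where k: "k = Suc (Suc m)" using assms(3) by (metis add_2_eq_Suc le_Suc_ex)
  have "face i (k - 1) (face j k x) = act (coface j \<circ> coface i) m k x"
    unfolding ss_face_def k using assms k
    by (simp add: act_act simp_op_coface)
  also have "\<dots> = act (coface i \<circ> coface (j - 1)) m k x"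
    by (rule act_cong) (use assms in \<open>auto simp: coface_def\<close>)
  also have "\<dots> = face (j - 1) (k - 1) (face i k x)"
    unfolding ss_face_def k using assms k
    by (simp add: act_act simp_op_coface)
  finally show ?thesis .
qed

lemma face_cst: "v \<in> X 0 \<Longrightarrow> i \<le> k \<Longrightarrow> 1 \<le> k \<Longrightarrow> face i k (cst k v) = cst (k - 1) v"
  unfolding ss_face_def ss_const_def
  by (subst act_act) (auto intro: simp_op_const0 simp: comp_def simp_op_def coface_def)

lemma degen_cst: "v \<in> X 0 \<Longrightarrow> j \<le> k \<Longrightarrow> degen j k (cst k v) = cst (Suc k) v"
  unfolding degen_def ss_const_def
  by (subst act_act) (auto intro: simp_op_codeg simp_op_const0 simp: comp_def)

lemma face_degen:
  assumes "x \<in> X k" "j \<le> k" "i \<le> Suc k"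
  shows "face i (Suc k) (degen j k x) =
    (if i = j \<or> i = Suc j then x else if i < j then degen (j - 1) (k - 1) (face i k x)
     else degen j (k - 1) (face (i - 1) k x))"
proof -
  have L: "face i (Suc k) (degen j k x) = act (codeg j \<circ> coface i) k k x"
    unfolding ss_face_def degen_def using act_act[OF simp_op_coface simp_op_codeg assms(1)] assms
    by simp
  show ?thesis
  proof (cases "i = j \<or> i = Suc j")
    case True
    have "\<And>t. t \<le> k \<Longrightarrow> (codeg j \<circ> coface i) t = t"
      using True unfolding codeg_def coface_def by auto
    then show ?thesis unfolding L using assms True act_id by simp
  next
    case F: False
    then have k1: "1 \<le> k" using assms by auto
    then obtain m where k: "k = Suc m" by (cases k) auto
    show ?thesis
    proof (cases "i < j")
      case True
      have "degen (j - 1) (k - 1) (face i k x) = act (coface i \<circ> codeg (j - 1)) k k x"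
        unfolding ss_face_def degen_def k using act_act[OF simp_op_codeg simp_op_coface, of "j - 1" m i x] assms True k
        by simp
      moreover have "act (codeg j \<circ> coface i) k k x = act (coface i \<circ> codeg (j - 1)) k k x"
        by (rule act_cong) (use assms True in \<open>auto simp: codeg_def coface_def\<close>)
      ultimately show ?thesis unfolding L using F True by simp
    next
      case False
      have "degen j (k - 1) (face (i - 1) k x) = act (coface (i - 1) \<circ> codeg j) k k x"
        unfolding ss_face_def degen_def k using act_act[OF simp_op_codeg simp_op_coface, of j m "i - 1" x] assms False F k
        by simp
      moreover have "act (codeg j \<circ> coface i) k k x = act (coface (i - 1) \<circ> codeg j) k k x"
        by (rule act_cong) (use assms False F in \<open>auto simp: codeg_def coface_def\<close>)
      ultimately show ?thesis unfolding L using F False by simp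
    qed
  qed
qed

lemma face_of_face:
  assumes "i \<le> k - 1" "j \<le> k" "2 \<le> k" "x \<in> X k"
  shows "face i (k - 1) (face j k x) =
    (if i < j then face (j - 1) (k - 1) (face i k x) else face j (k - 1) (face (Suc i) k x))"
proof (cases "i < j")
  case True then show ?thesis using face_face assms by simp
next
  case False
  then have "face j (k - 1) (face (Suc i) k x) = face i (k - 1) (face j k x)"
    using face_face[of j "Suc i" k x] assms by simp
  then show ?thesis using False by simp
qed

end

locale kan_loc =
  fixes K :: "'a sset" and v :: 'a and m :: nat
  assumes kan: "kan_complex K" and v: "v \<in> ss_sx K 0"
begin

abbreviation "n \<equiv> Suc m"

sublocale sset_loc K using kan by (unfold_locales) (simp add: kan_complex_def)

abbreviation "star k \<equiv> cst k v"
abbreviation "S \<equiv> pi_sphere K v n"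
abbreviation "hp \<equiv> pi_htpy K v n"

lemma star_closed[simp]: "star k \<in> X k" using cst_closed v by simp

lemma face_star[simp]: "i \<le> k \<Longrightarrow> 1 \<le> k \<Longrightarrow> face i k (star k) = star (k - 1)"
  using face_cst v by simp

lemma fill:
  assumes "1 \<le> N" "k \<le> N" "\<And>i. i \<le> N \<Longrightarrow> i \<noteq> k \<Longrightarrow> x i \<in> X (N - 1)"
    "\<And>i j. i < j \<Longrightarrow> j \<le> N \<Longrightarrow> i \<noteq> k \<Longrightarrow> j \<noteq> k \<Longrightarrow>
       face i (N - 1) (x j) = face (j - 1) (N - 1) (x i)"
  shows "\<exists>y\<in>X N. \<forall>i\<le>N. i \<noteq> k \<longrightarrow> face i N y = x i"
  using kan assms unfolding kan_complex_def by blast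

lemma fill2:
  assumes "k \<le> Suc (Suc n)" "\<And>i. i \<le> Suc (Suc n) \<Longrightarrow> i \<noteq> k \<Longrightarrow> x i \<in> X (Suc n)"
    "\<And>i j. i < j \<Longrightarrow> j \<le> Suc (Suc n) \<Longrightarrow> i \<noteq> k \<Longrightarrow> j \<noteq> k \<Longrightarrow>
       face i (Suc n) (x j) = face (j - 1) (Suc n) (x i)"
  shows "\<exists>u\<in>X (Suc n). \<forall>i\<le>Suc n. face i (Suc n) u =
     (if i < k then face (k - 1) (Suc n) (x i) else face k (Suc n) (x (Suc i)))"
proof -
  obtain w where w: "w \<in> X (Suc (Suc n))" "\<forall>i\<le>Suc (Suc n). i \<noteq> k \<longrightarrow> face i (Suc (Suc n)) w = x i"
    using fill[of "Suc (Suc n)" k x] assms by auto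
  show ?thesis
  proof (intro bexI allI impI)
    show "face k (Suc (Suc n)) w \<in> X (Suc n)" using face_closed[OF w(1)] assms by simp
    fix i assume i: "i \<le> Suc n"
    show "face i (Suc n) (face k (Suc (Suc n)) w) =
     (if i < k then face (k - 1) (Suc n) (x i) else face k (Suc n) (x (Suc i)))"
      using face_of_face[of i "Suc (Suc n)" k w] w i assms(1) by auto
  qed
qed

lemma fill1:
  assumes "k \<le> Suc n" "\<And>i. i \<le> Suc n \<Longrightarrow> i \<noteq> k \<Longrightarrow> x i \<in> X n"
    "\<And>i j. i < j \<Longrightarrow> j \<le> Suc n \<Longrightarrow> i \<noteq> k \<Longrightarrow> j \<noteq> k \<Longrightarrow>
       face i n (x j) = face (j - 1) n (x i)"
  shows "\<exists>w\<in>X (Suc n). (\<forall>i\<le>Suc n. i \<noteq> k \<longrightarrow> face i (Suc n) w = x i) \<and>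
     (\<forall>i\<le>n. face i n (face k (Suc n) w) =
     (if i < k then face (k - 1) n (x i) else face k n (x (Suc i))))"
proof -
  obtain w where w: "w \<in> X (Suc n)" "\<forall>i\<le>Suc n. i \<noteq> k \<longrightarrow> face i (Suc n) w = x i"
    using fill[of "Suc n" k x] assms by auto
  show ?thesis
  proof (intro bexI conjI allI impI)
    fix i assume i: "i \<le> n"
    show "face i n (face k (Suc n) w) =
     (if i < k then face (k - 1) n (x i) else face k n (x (Suc i)))"
      using face_of_face[of i "Suc n" k w] w i assms(1) by auto
  qed (use w in auto)
qed

end


context kan_loc begin

lemma S_iff: "x \<in> S \<longleftrightarrow> x \<in> X n \<and> (\<forall>i\<le>n. face i n x = star (m))"
  unfolding pi_sphere_def by simp

lemma star_S: "star n \<in> S"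
  unfolding S_iff by simp

lemma deg_sphere:
  assumes a: "a \<in> S" and j: "j \<le> n" and i: "i \<le> Suc n"
  shows "face i (Suc n) (degen j n a) = (if i = j \<or> i = Suc j then a else star n)"
proof -
  have aX: "a \<in> X n" and af: "\<And>i. i \<le> n \<Longrightarrow> face i n a = star (m)" using a S_iff by auto
  have e: "Suc (m) = n" by simp
  show ?thesis
    unfolding face_degen[OF aX j i] using af i j degen_cst[OF v, of "j - 1" "m"] degen_cst[OF v, of j "m"]
    by auto
qed

lemma hp_tab: "hp x x' \<longleftrightarrow> (\<exists>y\<in>X (Suc n). \<forall>i\<le>Suc n.
    face i (Suc n) y = (if i < n then star n else if i = n then x else x'))"
  unfolding pi_htpy_def
proof (intro iffI; elim bexE; intro bexI)
  fix y assume "y \<in> X (Suc n)" and h: "face n (Suc n) y = x \<and> face (Suc n) (Suc n) y = x' \<and> (\<forall>i<n. face i (Suc n) y = star n)"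
  show "\<forall>i\<le>Suc n. face i (Suc n) y = (if i < n then star n else if i = n then x else x')"
    using h by (auto simp: le_Suc_eq)
qed auto

definition "prodrel x y p \<longleftrightarrow> (\<exists>z\<in>X (Suc n). \<forall>i\<le>Suc n.
    face i (Suc n) z = (if i < m then star n else if i = m then x else if i = n then p else y))"

lemma hp_refl: "x \<in> S \<Longrightarrow> hp x x"
  unfolding hp_tab
  by (rule bexI[of _ "degen n n x"]) (auto simp: deg_sphere intro!: degen_closed simp: S_iff)

lemma hp_eucl:
  assumes "hp x x'" "hp x x''" shows "hp x' x''"
proof -
  obtain y where y: "y \<in> X (Suc n)" and ty: "\<And>i. i \<le> Suc n \<Longrightarrow>
    face i (Suc n) y = (if i < n then star n else if i = n then x else x')" using assms(1) hp_tab by auto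
  obtain y' where y': "y' \<in> X (Suc n)" and ty': "\<And>i. i \<le> Suc n \<Longrightarrow>
    face i (Suc n) y' = (if i < n then star n else if i = n then x else x'')" using assms(2) hp_tab by auto
  define h where "h i = (if i < n then star (Suc n) else if i = n then y else y')" for i
  obtain u where u: "u \<in> X (Suc n)" "\<forall>i\<le>Suc n. face i (Suc n) u =
     (if i < Suc (Suc n) then face (Suc (Suc n) - 1) (Suc n) (h i) else face (Suc (Suc n)) (Suc n) (h (Suc i)))"
  proof (rule fill2[THEN bexE])
    show "\<And>i. i \<le> Suc (Suc n) \<Longrightarrow> i \<noteq> Suc (Suc n) \<Longrightarrow> h i \<in> X (Suc n)"
      using y y' by (auto simp: h_def)
    show "\<And>i j. i < j \<Longrightarrow> j \<le> Suc (Suc n) \<Longrightarrow> i \<noteq> Suc (Suc n) \<Longrightarrow> j \<noteq> Suc (Suc n) \<Longrightarrow>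
       face i (Suc n) (h j) = face (j - 1) (Suc n) (h i)"
      by (auto simp: h_def ty ty')
  qed auto
  show ?thesis unfolding hp_tab
    by (rule bexI[OF _ u(1)]) (use u(2) in \<open>auto simp: h_def ty ty'\<close>)
qed

lemma hp_sym: "x \<in> S \<Longrightarrow> hp x x' \<Longrightarrow> hp x' x"
  using hp_eucl hp_refl by blast

lemma hp_trans: "x \<in> S \<Longrightarrow> hp x y \<Longrightarrow> hp y z \<Longrightarrow> hp x z"
  using hp_eucl hp_sym by blast

lemma hp_S:
  assumes "x \<in> S" "hp x x'" shows "x' \<in> S"
proof -
  obtain y where y: "y \<in> X (Suc n)" and ty: "\<And>i. i \<le> Suc n \<Longrightarrow>
    face i (Suc n) y = (if i < n then star n else if i = n then x else x')" using assms(2) hp_tab by auto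
  have xf: "\<And>i. i \<le> n \<Longrightarrow> face i n x = star (m)" using assms(1) S_iff by auto
  have "x' = face (Suc n) (Suc n) y" using ty by simp
  moreover have "face (Suc n) (Suc n) y \<in> X n" using face_closed[OF y, of "Suc n"] by simp
  moreover have "face i n (face (Suc n) (Suc n) y) = star (m)" if "i \<le> n" for i
    using face_of_face[of i "Suc n" "Suc n" y] that y ty xf by simp
  ultimately show ?thesis unfolding S_iff by simp
qed

lemma prod_S:
  assumes "x \<in> S" "y \<in> S" "prodrel x y p" shows "p \<in> S"
proof -
  obtain z where z: "z \<in> X (Suc n)" and tz: "\<And>i. i \<le> Suc n \<Longrightarrow>
    face i (Suc n) z = (if i < m then star n else if i = m then x else if i = n then p else y)"
    using assms(3) prodrel_def by auto
  have xf: "\<And>i. i \<le> n \<Longrightarrow> face i n x = star (m)" using assms(1) S_iff by auto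
  have yf: "\<And>i. i \<le> n \<Longrightarrow> face i n y = star (m)" using assms(2) S_iff by auto
  have "p = face n (Suc n) z" using tz by simp
  moreover have "face n (Suc n) z \<in> X n" using face_closed[OF z, of n] by simp
  moreover have "face i n (face n (Suc n) z) = star (m)" if "i \<le> n" for i
    using face_of_face[of i "Suc n" n z] that z tz xf yf by auto
  ultimately show ?thesis unfolding S_iff by simp
qed

lemma prod_ex:
  assumes "x \<in> S" "y \<in> S" shows "\<exists>p. prodrel x y p"
proof -
  have xf: "\<And>i. i \<le> n \<Longrightarrow> face i n x = star (m)" and xX: "x \<in> X n" using assms(1) S_iff by auto
  have yf: "\<And>i. i \<le> n \<Longrightarrow> face i n y = star (m)" and yX: "y \<in> X n" using assms(2) S_iff by auto
  define h where "h i = (if i < m then star n else if i = m then x else y)" for i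
  obtain w where w: "w \<in> X (Suc n)" "\<forall>i\<le>Suc n. i \<noteq> n \<longrightarrow> face i (Suc n) w = h i"
  proof (rule fill1[THEN bexE])
    show "\<And>i. i \<le> Suc n \<Longrightarrow> i \<noteq> n \<Longrightarrow> h i \<in> X n"
      using xX yX by (auto simp: h_def)
    show "\<And>i j. i < j \<Longrightarrow> j \<le> Suc n \<Longrightarrow> i \<noteq> n \<Longrightarrow> j \<noteq> n \<Longrightarrow>
       face i n (h j) = face (j - 1) n (h i)"
      by (auto simp: h_def xf yf)
  qed auto
  have "prodrel x y (face n (Suc n) w)" unfolding prodrel_def
    by (rule bexI[OF _ w(1)]) (use w(2) in \<open>auto simp: h_def\<close>)
  then show ?thesis by blast
qed

lemma prod_L1:
  assumes "hp x x'" "prodrel x y p" "prodrel x' y p'" shows "hp p p'"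
proof -
  obtain g where g: "g \<in> X (Suc n)" and tg: "\<And>i. i \<le> Suc n \<Longrightarrow>
    face i (Suc n) g = (if i < n then star n else if i = n then x else x')" using assms(1) hp_tab by auto
  obtain z where z: "z \<in> X (Suc n)" and tz: "\<And>i. i \<le> Suc n \<Longrightarrow>
    face i (Suc n) z = (if i < m then star n else if i = m then x else if i = n then p else y)"
    using assms(2) prodrel_def by auto
  obtain z' where z': "z' \<in> X (Suc n)" and tz': "\<And>i. i \<le> Suc n \<Longrightarrow>
    face i (Suc n) z' = (if i < m then star n else if i = m then x' else if i = n then p' else y)"
    using assms(3) prodrel_def by auto
  define h where "h i = (if i < m then star (Suc n) else if i = m then g else if i = Suc n then z else z')" for i
  obtain u where u: "u \<in> X (Suc n)" "\<forall>i\<le>Suc n. face i (Suc n) u =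
     (if i < n then face (m) (Suc n) (h i) else face n (Suc n) (h (Suc i)))"
  proof (rule fill2[THEN bexE])
    show "\<And>i. i \<le> Suc (Suc n) \<Longrightarrow> i \<noteq> n \<Longrightarrow> h i \<in> X (Suc n)"
      using g z z' by (auto simp: h_def)
    show "\<And>i j. i < j \<Longrightarrow> j \<le> Suc (Suc n) \<Longrightarrow> i \<noteq> n \<Longrightarrow> j \<noteq> n \<Longrightarrow>
       face i (Suc n) (h j) = face (j - 1) (Suc n) (h i)"
      by (auto simp: h_def tg tz tz')
  qed auto
  show ?thesis unfolding hp_tab
    by (rule bexI[OF _ u(1)]) (use u(2) in \<open>auto simp: h_def tg tz tz'\<close>)
qed

lemma prod_L2:
  assumes "x \<in> S" "hp y y'" "prodrel x y p" shows "prodrel x y' p"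
proof -
  have xX: "x \<in> X n" using assms(1) S_iff by auto
  obtain g where g: "g \<in> X (Suc n)" and tg: "\<And>i. i \<le> Suc n \<Longrightarrow>
    face i (Suc n) g = (if i < n then star n else if i = n then y else y')" using assms(2) hp_tab by auto
  obtain z where z: "z \<in> X (Suc n)" and tz: "\<And>i. i \<le> Suc n \<Longrightarrow>
    face i (Suc n) z = (if i < m then star n else if i = m then x else if i = n then p else y)"
    using assms(3) prodrel_def by auto
  have td: "\<And>i. i \<le> Suc n \<Longrightarrow> face i (Suc n) (degen (m) n x) = (if i = m \<or> i = n then x else star n)"
    using deg_sphere[OF assms(1), of "m"] by simp
  define h where "h i = (if i < m then star (Suc n) else if i = m then degen (m) n x else if i = n then z else g)" for i
  obtain u where u: "u \<in> X (Suc n)" "\<forall>i\<le>Suc n. face i (Suc n) u =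
     (if i < Suc n then face (Suc m) (Suc n) (h i) else face (Suc n) (Suc n) (h (Suc i)))"
  proof (rule fill2[THEN bexE])
    show "\<And>i. i \<le> Suc (Suc n) \<Longrightarrow> i \<noteq> Suc n \<Longrightarrow> h i \<in> X (Suc n)"
      using g z xX by (auto simp: h_def intro: degen_closed)
    show "\<And>i j. i < j \<Longrightarrow> j \<le> Suc (Suc n) \<Longrightarrow> i \<noteq> Suc n \<Longrightarrow> j \<noteq> Suc n \<Longrightarrow>
       face i (Suc n) (h j) = face (j - 1) (Suc n) (h i)"
      by (auto simp: h_def tg tz deg_sphere[OF assms(1)])
  qed auto
  show ?thesis unfolding prodrel_def
    by (rule bexI[OF _ u(1)]) (use u(2) in \<open>auto simp: h_def tg tz deg_sphere[OF assms(1)]\<close>)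
qed

lemma prod_assoc:
  assumes "prodrel x y p1" "prodrel y w p2" "prodrel p1 w q" shows "prodrel x p2 q"
proof -
  obtain z1 where z1: "z1 \<in> X (Suc n)" and t1: "\<And>i. i \<le> Suc n \<Longrightarrow>
    face i (Suc n) z1 = (if i < m then star n else if i = m then x else if i = n then p1 else y)"
    using assms(1) prodrel_def by auto
  obtain z2 where z2: "z2 \<in> X (Suc n)" and t2: "\<And>i. i \<le> Suc n \<Longrightarrow>
    face i (Suc n) z2 = (if i < m then star n else if i = m then y else if i = n then p2 else w)"
    using assms(2) prodrel_def by auto
  obtain z3 where z3: "z3 \<in> X (Suc n)" and t3: "\<And>i. i \<le> Suc n \<Longrightarrow>
    face i (Suc n) z3 = (if i < m then star n else if i = m then p1 else if i = n then q else w)"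
    using assms(3) prodrel_def by auto
  define h where "h i = (if i < m then star (Suc n) else if i = m then z1 else if i = Suc n then z3 else z2)" for i
  obtain u where u: "u \<in> X (Suc n)" "\<forall>i\<le>Suc n. face i (Suc n) u =
     (if i < n then face (m) (Suc n) (h i) else face n (Suc n) (h (Suc i)))"
  proof (rule fill2[THEN bexE])
    show "\<And>i. i \<le> Suc (Suc n) \<Longrightarrow> i \<noteq> n \<Longrightarrow> h i \<in> X (Suc n)"
      using z1 z2 z3 by (auto simp: h_def)
    show "\<And>i j. i < j \<Longrightarrow> j \<le> Suc (Suc n) \<Longrightarrow> i \<noteq> n \<Longrightarrow> j \<noteq> n \<Longrightarrow>
       face i (Suc n) (h j) = face (j - 1) (Suc n) (h i)"
      by (auto simp: h_def t1 t2 t3)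
  qed auto
  show ?thesis unfolding prodrel_def
    by (rule bexI[OF _ u(1)]) (use u(2) in \<open>auto simp: h_def t1 t2 t3\<close>)
qed

lemma prod_unit_r: "x \<in> S \<Longrightarrow> prodrel x (star n) x"
  unfolding prodrel_def
  by (rule bexI[of _ "degen (m) n x"]) (use in \<open>auto simp: deg_sphere intro!: degen_closed simp: S_iff\<close>)

lemma prod_unit_l: "x \<in> S \<Longrightarrow> prodrel (star n) x x"
  unfolding prodrel_def
  by (rule bexI[of _ "degen n n x"]) (use in \<open>auto simp: deg_sphere intro!: degen_closed simp: S_iff\<close>)

lemma prod_inv:
  assumes "x \<in> S" shows "\<exists>x'\<in>S. prodrel x' x (star n)"
proof -
  have xf: "\<And>i. i \<le> n \<Longrightarrow> face i n x = star (m)" and xX: "x \<in> X n" using assms(1) S_iff by auto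
  define h where "h i = (if i = Suc n then x else star n)" for i
  obtain w where w: "w \<in> X (Suc n)" "\<forall>i\<le>Suc n. i \<noteq> m \<longrightarrow> face i (Suc n) w = h i"
    "\<forall>i\<le>n. face i n (face (m) (Suc n) w) =
     (if i < m then face (m - 1) n (h i) else face (m) n (h (Suc i)))"
  proof (rule fill1[THEN bexE])
    show "\<And>i. i \<le> Suc n \<Longrightarrow> i \<noteq> m \<Longrightarrow> h i \<in> X n"
      using xX by (auto simp: h_def)
    show "\<And>i j. i < j \<Longrightarrow> j \<le> Suc n \<Longrightarrow> i \<noteq> m \<Longrightarrow> j \<noteq> m \<Longrightarrow>
       face i n (h j) = face (j - 1) n (h i)"
      by (auto simp: h_def xf)
  qed auto
  have "face (m) (Suc n) w \<in> S" unfolding S_iff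
    using w(3) face_closed[OF w(1), of "m"] by (auto simp: h_def xf)
  moreover have "prodrel (face (m) (Suc n) w) x (star n)" unfolding prodrel_def
    by (rule bexI[OF _ w(1)]) (use w(2) in \<open>auto simp: h_def\<close>)
  ultimately show ?thesis by blast
qed

end


context kan_loc begin

abbreviation "cls \<equiv> pi_cls K v n"
abbreviation "G \<equiv> pi_group K v n"

lemma mem_cls: "x' \<in> cls x \<longleftrightarrow> x' \<in> S \<and> hp x x'"
  unfolding pi_cls_def by simp

lemma cls_self: "x \<in> S \<Longrightarrow> x \<in> cls x"
  using hp_refl mem_cls by blast

lemma cls_eq: "x \<in> S \<Longrightarrow> hp x x' \<Longrightarrow> cls x' = cls x"
  unfolding pi_cls_def using hp_S hp_sym hp_trans by blast

lemma prodrel_iff: "prodrel x y p \<longleftrightarrow> (\<exists>z\<in>X (Suc n). (\<forall>i<m. face i (Suc n) z = star n) \<and>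
   face m (Suc n) z = x \<and> face (Suc n) (Suc n) z = y \<and> face n (Suc n) z = p)"
  unfolding prodrel_def
proof (intro iffI; elim bexE; intro bexI)
  fix z assume "z \<in> X (Suc n)" and h: "(\<forall>i<m. face i (Suc n) z = star n) \<and>
   face m (Suc n) z = x \<and> face (Suc n) (Suc n) z = y \<and> face n (Suc n) z = p"
  show "\<forall>i\<le>Suc n. face i (Suc n) z = (if i < m then star n else if i = m then x else if i = n then p else y)"
  proof (intro allI impI)
    fix i assume "i \<le> Suc n"
    then have "i < m \<or> i = m \<or> i = n \<or> i = Suc n" by auto
    then show "face i (Suc n) z = (if i < m then star n else if i = m then x else if i = n then p else y)"
      using h by auto
  qed
qed auto

lemma pi_mult:
  assumes x: "x \<in> S" and y: "y \<in> S" and p: "prodrel x y p"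
  shows "mult G (cls x) (cls y) = cls p"
proof -
  have pS: "p \<in> S" using prod_S x y p by blast
  show ?thesis unfolding pi_group_def monoid.simps
  proof (rule the_equality)
    obtain z where "z \<in> X (Suc n)" "(\<forall>i<m. face i (Suc n) z = star n)"
      "face m (Suc n) z = x" "face (Suc n) (Suc n) z = y" "face n (Suc n) z = p"
      using p prodrel_iff by blast
    then show "\<exists>x'\<in>cls x. \<exists>y'\<in>cls y. \<exists>z\<in>X (Suc n). (\<forall>i<n - 1. face i (Suc n) z = star n) \<and>
      face (n - 1) (Suc n) z = x' \<and> face (Suc n) (Suc n) z = y' \<and> cls p = cls (face n (Suc n) z)"
      using cls_self x y by auto
  next
    fix C assume "\<exists>x'\<in>cls x. \<exists>y'\<in>cls y. \<exists>z\<in>X (Suc n). (\<forall>i<n - 1. face i (Suc n) z = star n) \<and>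
      face (n - 1) (Suc n) z = x' \<and> face (Suc n) (Suc n) z = y' \<and> C = cls (face n (Suc n) z)"
    then obtain x' y' z where x': "x' \<in> cls x" and y': "y' \<in> cls y" and z: "z \<in> X (Suc n)"
      "\<forall>i<m. face i (Suc n) z = star n" "face m (Suc n) z = x'" "face (Suc n) (Suc n) z = y'"
      and C: "C = cls (face n (Suc n) z)" by auto
    have pr: "prodrel x' y' (face n (Suc n) z)" using z prodrel_iff by blast
    have hx: "hp x x'" and hy: "hp y y'" using x' y' mem_cls by auto
    have "prodrel x y' p" using prod_L2[OF x hy p] .
    then have "hp p (face n (Suc n) z)" using prod_L1[OF hx _ pr] by blast
    then show "C = cls p" using C cls_eq pS by simp
  qed
qed

lemma group_G: "group G"
proof -
  have car: "carrier G = cls ` S" unfolding pi_group_def by simp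
  have one: "one G = cls (star n)" unfolding pi_group_def by simp
  show ?thesis
  proof (rule groupI)
    fix A B assume "A \<in> carrier G" "B \<in> carrier G"
    then obtain x y where x: "x \<in> S" "A = cls x" and y: "y \<in> S" "B = cls y" using car by auto
    obtain p where p: "prodrel x y p" using prod_ex x y by blast
    show "mult G A B \<in> carrier G" using pi_mult[OF x(1) y(1) p] prod_S[OF x(1) y(1) p] x y car by simp
  next
    show "one G \<in> carrier G" using car one star_S by simp
  next
    fix A B C assume "A \<in> carrier G" "B \<in> carrier G" "C \<in> carrier G"
    then obtain x y w where x: "x \<in> S" "A = cls x" and y: "y \<in> S" "B = cls y" and w: "w \<in> S" "C = cls w"
      using car by auto
    obtain p1 where p1: "prodrel x y p1" using prod_ex x y by blast
    obtain p2 where p2: "prodrel y w p2" using prod_ex y w by blast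
    have p1S: "p1 \<in> S" using prod_S x y p1 by blast
    have p2S: "p2 \<in> S" using prod_S y w p2 by blast
    obtain q where q: "prodrel p1 w q" using prod_ex p1S w by blast
    have q': "prodrel x p2 q" using prod_assoc p1 p2 q by blast
    show "mult G (mult G A B) C = mult G A (mult G B C)"
      using pi_mult[OF x(1) y(1) p1] pi_mult[OF y(1) w(1) p2] pi_mult[OF p1S w(1) q] pi_mult[OF x(1) p2S q']
        x y w by simp
  next
    fix A assume "A \<in> carrier G"
    then obtain x where x: "x \<in> S" "A = cls x" using car by auto
    show "mult G (one G) A = A" using pi_mult[OF star_S x(1) prod_unit_l[OF x(1)]] x one by simp
  next
    fix A assume "A \<in> carrier G"
    then obtain x where x: "x \<in> S" "A = cls x" using car by auto
    obtain x' where x': "x' \<in> S" "prodrel x' x (star n)" using prod_inv x by blast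
    show "\<exists>B\<in>carrier G. mult G B A = one G"
      using pi_mult[OF x'(1) x(1) x'(2)] x car one x'(1) by auto
  qed
qed

end


lemma sx_delta: "ss_sx (delta N) k = {xs. length xs = Suc k \<and> sorted xs \<and> (\<forall>i\<in>set xs. i \<le> N)}"
  by (simp add: delta_def)

lemma act_delta: "ss_act (delta N) f k' k xs = map (\<lambda>i. xs ! f i) [0..<Suc k']"
  by (simp add: delta_def)

lemma simp_op_list: "\<xi> \<in> ss_sx (delta N) k \<Longrightarrow> simp_op (\<lambda>t. \<xi> ! t) k N"
  unfolding sx_delta simp_op_def by (auto simp: sorted_iff_nth_mono)

lemma delta_act_closed: "simp_op f k' k \<Longrightarrow> \<xi> \<in> ss_sx (delta N) k \<Longrightarrow>
   map (\<lambda>i. \<xi> ! f i) [0..<Suc k'] \<in> ss_sx (delta N) k'"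
proof -
  assume f: "simp_op f k' k" and xi: "\<xi> \<in> ss_sx (delta N) k"
  have l: "length \<xi> = Suc k" and s: "\<And>i j. i \<le> j \<Longrightarrow> j \<le> k \<Longrightarrow> \<xi> ! i \<le> \<xi> ! j"
    and b: "\<And>i. i \<le> k \<Longrightarrow> \<xi> ! i \<le> N"
    using xi unfolding sx_delta by (auto simp: sorted_iff_nth_mono less_Suc_eq_le)
  have fm: "\<And>i j. i \<le> j \<Longrightarrow> j \<le> k' \<Longrightarrow> f i \<le> f j" and fb: "\<And>i. i \<le> k' \<Longrightarrow> f i \<le> k"
    using f unfolding simp_op_def by auto
  show ?thesis unfolding sx_delta
    using s fm fb b by (auto simp: sorted_iff_nth_mono less_Suc_eq_le simp del: upt_Suc)
qed

lemma not_degen0: "\<not> degenerate X 0 x"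
  unfolding degenerate_def by simp

lemma th0_simps[simp]: "ss_sx (th0 K) = ss_sx K" "ss_act (th0 K) = ss_act K"
  "ss_thin (th0 K) k = (if k = 0 then {} else ss_sx K k)"
  by (simp_all add: th0_def mk_strat_def)

lemma th0_face[simp]: "ss_face (th0 K) = ss_face K"
  by (simp add: ss_face_def fun_eq_iff)

lemma th0_const[simp]: "ss_const (th0 K) = ss_const K"
  by (simp add: ss_const_def fun_eq_iff)

lemma th0_yon[simp]: "yon (th0 K) = yon K"
  by (simp add: yon_def fun_eq_iff)

context sset_loc begin

lemma simp_op_miss:
  assumes "simp_op f k (Suc l)" "j \<le> Suc l" "\<forall>t\<le>k. f t \<noteq> j"
  shows "simp_op (\<lambda>t. if f t < j then f t else f t - 1) k l"
  unfolding simp_op_def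
proof (intro conjI allI impI)
  fix a b assume ab: "a \<le> b \<and> b \<le> k"
  have "f a \<le> f b" "f a \<noteq> j" "f b \<noteq> j" using assms ab unfolding simp_op_def by auto
  then show "(if f a < j then f a else f a - 1) \<le> (if f b < j then f b else f b - 1)"
    by (auto split: if_split)
next
  fix a assume a: "a \<le> k"
  have "f a \<le> Suc l" "f a \<noteq> j" using assms a unfolding simp_op_def by auto
  then show "(if f a < j then f a else f a - 1) \<le> l" using assms(2) by (auto split: if_split)
qed

lemma act_miss:
  assumes x: "x \<in> X (Suc l)" and j: "j \<le> Suc l" and f: "simp_op f k (Suc l)" and nf: "\<forall>t\<le>k. f t \<noteq> j"
  shows "act f k (Suc l) x = act (\<lambda>t. if f t < j then f t else f t - 1) k l (face j (Suc l) x)"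
proof -
  have "act (\<lambda>t. if f t < j then f t else f t - 1) k l (face j (Suc l) x)
     = act (coface j \<circ> (\<lambda>t. if f t < j then f t else f t - 1)) k (Suc l) x"
    unfolding ss_face_def using act_act[OF simp_op_miss[OF f j nf] simp_op_coface[OF j] x] by simp
  also have "\<dots> = act f k (Suc l) x"
    by (rule act_cong) (use nf x in \<open>auto simp: coface_def\<close>)
  finally show ?thesis by simp
qed

lemma act_cst: "simp_op g k l \<Longrightarrow> v \<in> X 0 \<Longrightarrow> act g k l (cst l v) = cst k v"
  unfolding ss_const_def by (subst act_act) (auto intro: simp_op_const0 simp: comp_def)

end

context kan_loc begin

lemma sphere_miss:
  assumes a: "a \<in> S" and g: "simp_op g k n" and j: "j \<le> n" and ng: "\<forall>t\<le>k. g t \<noteq> j"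
  shows "act g k n a = star k"
proof -
  have "a \<in> X n" "face j n a = star m" using a j S_iff by auto
  then show ?thesis using act_miss[of a m j g k] g j ng act_cst[OF simp_op_miss[OF g j ng] v] by simp
qed

lemma bdry_miss: "\<xi> \<in> bdry N k \<Longrightarrow> \<exists>j\<le>N. \<forall>t\<le>k. \<xi> ! t \<noteq> j"
  unfolding bdry_def sx_delta by (auto simp: subset_iff)

lemma sphere_bdry: "a \<in> S \<Longrightarrow> \<xi> \<in> bdry n k \<Longrightarrow> act (\<lambda>t. \<xi> ! t) k n a = star k"
  using bdry_miss[of \<xi> n k] sphere_miss[of a "\<lambda>t. \<xi> ! t" k] simp_op_list[of \<xi> n k]
  unfolding bdry_def by auto

lemma tau_sphere_eq: "tau_sphere (th0 K) v n = S"
proof (intro equalityI subsetI)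
  fix a assume a: "a \<in> S"
  then show "a \<in> tau_sphere (th0 K) v n"
    unfolding tau_sphere_def yon_def using sphere_bdry S_iff by auto
next
  fix a assume a: "a \<in> tau_sphere (th0 K) v n"
  then have aX: "a \<in> X n" and ab: "\<And>k \<xi>. \<xi> \<in> bdry n k \<Longrightarrow> act (\<lambda>t. \<xi> ! t) k n a = star k"
    unfolding tau_sphere_def yon_def by auto
  have "face i n a = star m" if i: "i \<le> n" for i
  proof -
    define \<xi> where "\<xi> = map (coface i) [0..<Suc m]"
    have "\<xi> \<in> bdry n m" unfolding bdry_def sx_delta \<xi>_def using i
      by (auto simp: sorted_iff_nth_mono coface_def subset_iff simp del: upt_Suc)
    then have "act (\<lambda>t. \<xi> ! t) m n a = star m" by (rule ab)
    moreover have "act (\<lambda>t. \<xi> ! t) m n a = face i n a"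
      unfolding ss_face_def \<xi>_def diff_Suc_1 by (rule act_cong) (use aX in \<open>auto simp: nth_map less_Suc_eq_le simp del: upt_Suc\<close>)
    ultimately show ?thesis by simp
  qed
  then show "a \<in> S" unfolding S_iff using aX by simp
qed

definition "Rj j a b \<longleftrightarrow> (\<exists>y\<in>X (Suc n). \<forall>i\<le>Suc n.
    face i (Suc n) y = (if i = j then a else if i = Suc j then b else star n))"

lemma Rj_shift:
  assumes a: "a \<in> S" and j: "j < n" and R: "Rj j a b" shows "Rj (Suc j) a b"
proof -
  obtain y where y: "y \<in> X (Suc n)" and ty: "\<And>i. i \<le> Suc n \<Longrightarrow>
    face i (Suc n) y = (if i = j then a else if i = Suc j then b else star n)" using R Rj_def by auto
  have aX: "a \<in> X n" using a S_iff by auto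
  define h where "h i = (if i = j then degen (Suc j) n a else if i = Suc (Suc j) then degen j n a
     else if i = Suc (Suc (Suc j)) then y else star (Suc n))" for i
  obtain u where u: "u \<in> X (Suc n)" "\<forall>i\<le>Suc n. face i (Suc n) u =
     (if i < Suc j then face (Suc j - 1) (Suc n) (h i) else face (Suc j) (Suc n) (h (Suc i)))"
  proof (rule fill2[THEN bexE])
    show "\<And>i. i \<le> Suc (Suc n) \<Longrightarrow> i \<noteq> Suc j \<Longrightarrow> h i \<in> X (Suc n)"
      using y aX j by (auto simp: h_def intro!: degen_closed)
    show "\<And>i k. i < k \<Longrightarrow> k \<le> Suc (Suc n) \<Longrightarrow> i \<noteq> Suc j \<Longrightarrow> k \<noteq> Suc j \<Longrightarrow>
       face i (Suc n) (h k) = face (k - 1) (Suc n) (h i)"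
      using j by (auto simp: h_def ty deg_sphere[OF a])
  qed (use j in auto)
  show ?thesis unfolding Rj_def
    by (rule bexI[OF _ u(1)]) (use u(2) j in \<open>auto simp: h_def ty deg_sphere[OF a]\<close>)
qed

lemma Rj_hp: "j \<le> n \<Longrightarrow> a \<in> S \<Longrightarrow> Rj j a b \<Longrightarrow> hp a b"
proof -
  assume j: "j \<le> n" and a: "a \<in> S" and R: "Rj j a b"
  have "Rj j a b \<longrightarrow> Rj n a b"
    using j by (induction j rule: inc_induct) (use Rj_shift a in auto)
  then have "Rj n a b" using R by simp
  then show "hp a b" unfolding Rj_def hp_tab
    by (elim bexE, intro bexI) (auto split: if_splits)
qed

lemma witness_iff:
  "tau_witness (th0 K) v n a b \<theta> \<longleftrightarrow> \<theta> \<in> X (Suc n) \<and> face m (Suc n) \<theta> = a \<and>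
     face (Suc n) (Suc n) \<theta> = b \<and> (\<forall>i<m. face i (Suc n) \<theta> = star n)"
proof -
  have sm: "strat_map (delta_adm n (Suc n)) (th0 K) (yon (th0 K) (Suc n) \<theta>)" if th: "\<theta> \<in> X (Suc n)"
  proof -
    have sx: "ss_sx (delta_adm n (Suc n)) = ss_sx (delta (Suc n))"
      "ss_act (delta_adm n (Suc n)) = ss_act (delta (Suc n))"
      by (simp_all add: delta_adm_def mk_strat_def)
    have cl: "act (\<lambda>i. \<xi> ! i) k (Suc n) \<theta> \<in> X k" if "\<xi> \<in> ss_sx (delta (Suc n)) k" for \<xi> k
      using act_closed[OF simp_op_list[OF that] th] .
    show ?thesis unfolding strat_map_def sx th0_simps th0_yon
    proof (intro conjI allI impI)
      fix k \<xi> assume "\<xi> \<in> ss_sx (delta (Suc n)) k"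
      then show "yon K (Suc n) \<theta> k \<xi> \<in> X k" unfolding yon_def using cl by simp
    next
      fix f k' k \<xi> assume a: "simp_op f k' k \<and> \<xi> \<in> ss_sx (delta (Suc n)) k"
      then have "act f k' k (act (\<lambda>i. \<xi> ! i) k (Suc n) \<theta>) = act ((\<lambda>i. \<xi> ! i) \<circ> f) k' (Suc n) \<theta>"
        using act_act[OF _ simp_op_list th] by blast
      also have "\<dots> = act (\<lambda>i. ss_act (delta (Suc n)) f k' k \<xi> ! i) k' (Suc n) \<theta>"
        by (rule act_cong) (use th in \<open>auto simp: act_delta nth_map less_Suc_eq_le simp del: upt_Suc\<close>)
      finally show "yon K (Suc n) \<theta> k' (ss_act (delta (Suc n)) f k' k \<xi>) = act f k' k (yon K (Suc n) \<theta> k \<xi>)"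
        unfolding yon_def by simp
    next
      fix k \<xi> assume a: "\<xi> \<in> ss_thin (delta_adm n (Suc n)) k"
      have ne: "k \<noteq> 0"
      proof
        assume k0: "k = 0"
        have "n \<in> set \<xi>" "Suc n \<in> set \<xi>" "length \<xi> = 1"
          using a k0 not_degen0[of "delta (Suc n)" \<xi>] unfolding delta_adm_def mk_strat_def sx_delta by auto
        then show False by (metis One_nat_def length_0_conv length_Suc_conv list.set(1)
            list.set(2) n_not_Suc_n singletonD)
      qed
      have "\<xi> \<in> ss_sx (delta (Suc n)) k"
        using a unfolding delta_adm_def mk_strat_def degenerate_def by auto
      then show "yon K (Suc n) \<theta> k \<xi> \<in> (if k = 0 then {} else X k)" unfolding yon_def using cl ne by simp
    qed
  qed
  have e: "(\<forall>i\<le>Suc n. i \<notin> {n - 1, n, Suc n} \<longrightarrow> face i (Suc n) \<theta> = star n) \<longleftrightarrow> (\<forall>i<m. face i (Suc n) \<theta> = star n)"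
    by auto
  show ?thesis unfolding tau_witness_def th0_simps th0_face th0_const e using sm by auto
qed

end


abbreviation "DD n \<equiv> sprod (delta_min n) (delta_t 1)"

lemma sx_D: "ss_sx (DD n) k = ss_sx (delta n) k \<times> ss_sx (delta 1) k"
  by (simp add: sprod_def delta_min_def delta_t_def mk_strat_def)

lemma act_D: "ss_act (DD n) f k' k p = (map (\<lambda>i. fst p ! f i) [0..<Suc k'], map (\<lambda>i. snd p ! f i) [0..<Suc k'])"
  by (simp add: sprod_def delta_min_def delta_t_def mk_strat_def delta_def)

lemma thin_D: "p \<in> ss_thin (DD n) k \<Longrightarrow> p \<in> ss_sx (DD n) k \<and> k \<noteq> 0"
proof -
  assume p: "p \<in> ss_thin (DD n) k"
  have t: "ss_thin (DD n) k = {xs. degenerate (delta n) k xs} \<times>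
     ({xs. degenerate (delta 1) k xs} \<union> (if k = 1 then {[0..<Suc 1]} else {}))"
    by (simp add: sprod_def delta_min_def delta_t_def mk_strat_def)
  obtain \<xi> \<eta> where pe: "p = (\<xi>, \<eta>)" by (cases p)
  have p1: "degenerate (delta n) k \<xi>" using p unfolding t pe by blast
  have p2: "degenerate (delta 1) k \<eta> \<or> (k = 1 \<and> \<eta> = [0..<Suc 1])"
    using p unfolding t pe by (auto split: if_splits)
  have "\<xi> \<in> ss_sx (delta n) k" using p1 unfolding degenerate_def by blast
  moreover have "\<eta> \<in> ss_sx (delta 1) k"
  proof (cases "degenerate (delta 1) k \<eta>")
    case True then show ?thesis unfolding degenerate_def by blast
  next
    case False then have "k = 1" "\<eta> = [0..<Suc 1]" using p2 by auto
    then show ?thesis unfolding sx_delta by simp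
  qed
  moreover have "k \<noteq> 0" using p1 not_degen0[of "delta n" \<xi>] by (cases k) auto
  ultimately show ?thesis unfolding sx_D pe by simp
qed

lemma sx_delta_nth: "\<xi> \<in> ss_sx (delta N) k \<Longrightarrow> t \<le> k \<Longrightarrow> \<xi> ! t \<le> N"
  unfolding sx_delta by (auto simp: less_Suc_eq_le)

lemma sx_delta_mono: "\<xi> \<in> ss_sx (delta N) k \<Longrightarrow> s \<le> t \<Longrightarrow> t \<le> k \<Longrightarrow> \<xi> ! s \<le> \<xi> ! t"
  unfolding sx_delta by (auto simp: sorted_iff_nth_mono less_Suc_eq_le)

context kan_loc begin

lemma htpy_of_hp:
  assumes a: "a \<in> S" and b: "b \<in> S" and h: "hp a b"
  shows "tau_htpy (th0 K) n a b"
proof -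
  have "hp b a" using hp_sym[OF a h] .
  then obtain y where y: "y \<in> X (Suc n)" and ty: "\<And>i. i \<le> Suc n \<Longrightarrow>
    face i (Suc n) y = (if i < n then star n else if i = n then b else a)" using hp_tab by auto
  define F where "F \<xi> \<eta> t = (if \<eta> ! t \<noteq> 0 \<and> \<xi> ! t = n then Suc n else \<xi> ! t)" for \<xi> \<eta> :: "nat list" and t
  define H where "H k p = act (F (fst p) (snd p)) k (Suc n) y" for k p
  have sF: "simp_op (F \<xi> \<eta>) k (Suc n)" if xi: "\<xi> \<in> ss_sx (delta n) k" and eta: "\<eta> \<in> ss_sx (delta 1) k" for \<xi> \<eta> k
    unfolding simp_op_def
  proof (intro conjI allI impI)
    fix s t assume st: "s \<le> t \<and> t \<le> k"
    have "\<xi> ! s \<le> \<xi> ! t" "\<eta> ! s \<le> \<eta> ! t" "\<xi> ! t \<le> n"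
      using st sx_delta_mono[OF xi, of s t] sx_delta_mono[OF eta, of s t] sx_delta_nth[OF xi, of t] by auto
    then show "F \<xi> \<eta> s \<le> F \<xi> \<eta> t" unfolding F_def by auto
  next
    fix s assume "s \<le> k"
    then have "\<xi> ! s \<le> n" using sx_delta_nth[OF xi, of s] by simp
    then show "F \<xi> \<eta> s \<le> Suc n" unfolding F_def by simp
  qed
  have Hcl: "H k p \<in> X k" if "p \<in> ss_sx (DD n) k" for k p
    using that act_closed[OF sF y] unfolding H_def sx_D by auto
  have sm: "strat_map (DD n) (th0 K) H"
    unfolding strat_map_def th0_simps
  proof (intro conjI allI impI)
    fix k p assume "p \<in> ss_sx (DD n) k" then show "H k p \<in> X k" by (rule Hcl)
  next
    fix f k' k p assume fp: "simp_op f k' k \<and> p \<in> ss_sx (DD n) k"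
    then have p1: "fst p \<in> ss_sx (delta n) k" and p2: "snd p \<in> ss_sx (delta 1) k"
      unfolding sx_D mem_Times_iff by auto
    have "act f k' k (H k p) = act (F (fst p) (snd p) \<circ> f) k' (Suc n) y"
      unfolding H_def using act_act[OF conjunct1[OF fp] sF[OF p1 p2] y] by simp
    also have "\<dots> = H k' (ss_act (DD n) f k' k p)"
      unfolding H_def act_D
      by (rule act_cong) (use y in \<open>auto simp: F_def nth_map less_Suc_eq_le simp del: upt_Suc\<close>)
    finally show "H k' (ss_act (DD n) f k' k p) = act f k' k (H k p)" by simp
  next
    fix k p assume "p \<in> ss_thin (DD n) k"
    note tk = thin_D[OF this]
    then have "H k p \<in> X k" using Hcl by blast
    then show "H k p \<in> (if k = 0 then {} else X k)" using tk by simp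
  qed
  have e0: "H k (\<xi>, replicate (Suc k) 0) = yon K n a k \<xi>" if xi: "\<xi> \<in> ss_sx (delta n) k" for k \<xi>
  proof -
    have "H k (\<xi>, replicate (Suc k) 0) = act (coface (Suc n) \<circ> (\<lambda>t. \<xi> ! t)) k (Suc n) y"
      unfolding H_def
    proof (rule act_cong[OF _ y])
      fix t assume t: "t \<le> k"
      have "\<xi> ! t \<le> n" using sx_delta_nth[OF xi t] .
      then show "F (fst (\<xi>, replicate (Suc k) 0)) (snd (\<xi>, replicate (Suc k) 0)) t = (coface (Suc n) \<circ> (\<lambda>t. \<xi> ! t)) t"
        using t by (auto simp: F_def coface_def nth_replicate less_Suc_eq_le simp del: replicate_Suc)
    qed
    also have "\<dots> = act (\<lambda>t. \<xi> ! t) k n (face (Suc n) (Suc n) y)"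
      unfolding ss_face_def using act_act[OF simp_op_list[OF xi] simp_op_coface y, of "Suc n"] by simp
    finally show ?thesis using ty[of "Suc n"] unfolding yon_def by simp
  qed
  have e1: "H k (\<xi>, replicate (Suc k) 1) = yon K n b k \<xi>" if xi: "\<xi> \<in> ss_sx (delta n) k" for k \<xi>
  proof -
    have "H k (\<xi>, replicate (Suc k) 1) = act (coface n \<circ> (\<lambda>t. \<xi> ! t)) k (Suc n) y"
      unfolding H_def
    proof (rule act_cong[OF _ y])
      fix t assume t: "t \<le> k"
      have "\<xi> ! t \<le> n" using sx_delta_nth[OF xi t] .
      then show "F (fst (\<xi>, replicate (Suc k) 1)) (snd (\<xi>, replicate (Suc k) 1)) t = (coface n \<circ> (\<lambda>t. \<xi> ! t)) t"
        using t by (auto simp: F_def coface_def nth_replicate less_Suc_eq_le simp del: replicate_Suc)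
    qed
    also have "\<dots> = act (\<lambda>t. \<xi> ! t) k n (face n (Suc n) y)"
      unfolding ss_face_def using act_act[OF simp_op_list[OF xi] simp_op_coface y, of n] by simp
    finally show ?thesis using ty[of n] unfolding yon_def by simp
  qed
  have bd: "H k (\<xi>, \<eta>) = yon K n a k \<xi>" if xi: "\<xi> \<in> bdry n k" and eta: "\<eta> \<in> ss_sx (delta 1) k" for k \<xi> \<eta>
  proof -
    have xi': "\<xi> \<in> ss_sx (delta n) k" using xi bdry_def by auto
    have r: "yon K n a k \<xi> = star k" using sphere_bdry[OF a xi] unfolding yon_def .
    obtain j where j: "j \<le> n" and nj: "\<forall>t\<le>k. \<xi> ! t \<noteq> j" using bdry_miss[OF xi] by blast
    have sf: "simp_op (F \<xi> \<eta>) k (Suc n)" using sF[OF xi' eta] .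
    show ?thesis
    proof (cases "j < n")
      case True
      have nf: "\<forall>t\<le>k. F \<xi> \<eta> t \<noteq> j" using nj True unfolding F_def by auto
      have "H k (\<xi>, \<eta>) = act (\<lambda>t. if F \<xi> \<eta> t < j then F \<xi> \<eta> t else F \<xi> \<eta> t - 1) k n (face j (Suc n) y)"
        unfolding H_def using act_miss[OF y _ sf nf] True by simp
      also have "\<dots> = star k" using ty[of j] True act_cst[OF simp_op_miss[OF sf _ nf] v] by simp
      finally show ?thesis using r by simp
    next
      case False
      then have jn: "j = n" using j by simp
      have nf: "\<forall>t\<le>k. F \<xi> \<eta> t \<noteq> Suc n"
      proof (intro allI impI)
        fix t assume "t \<le> k"
        then have "\<xi> ! t \<le> n" "\<xi> ! t \<noteq> n" using sx_delta_nth[OF xi', of t] nj jn by auto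
        then show "F \<xi> \<eta> t \<noteq> Suc n" unfolding F_def by auto
      qed
      have "H k (\<xi>, \<eta>) = act (\<lambda>t. if F \<xi> \<eta> t < Suc n then F \<xi> \<eta> t else F \<xi> \<eta> t - 1) k n (face (Suc n) (Suc n) y)"
        unfolding H_def using act_miss[OF y _ sf nf] by simp
      also have "\<dots> = act (\<lambda>t. if F \<xi> \<eta> t < Suc n then F \<xi> \<eta> t else F \<xi> \<eta> t - 1) k n a" using ty[of "Suc n"] by simp
      also have "\<dots> = star k"
      proof (rule sphere_miss[OF a simp_op_miss[OF sf _ nf] order_refl])
        show "\<forall>t\<le>k. (if F \<xi> \<eta> t < Suc n then F \<xi> \<eta> t else F \<xi> \<eta> t - 1) \<noteq> n"
        proof (intro allI impI)
          fix t assume t: "t \<le> k"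
          then have "\<xi> ! t \<noteq> n" "F \<xi> \<eta> t \<noteq> Suc n" using nj jn nf by auto
          then show "(if F \<xi> \<eta> t < Suc n then F \<xi> \<eta> t else F \<xi> \<eta> t - 1) \<noteq> n"
            unfolding F_def by (auto split: if_splits)
        qed
      qed simp
      finally show ?thesis using r by simp
    qed
  qed
  show ?thesis unfolding tau_htpy_def th0_yon
  proof (intro exI[of _ H] conjI allI impI)
    show "strat_map (DD n) (th0 K) H" by (rule sm)
  next
    fix k \<xi> assume "\<xi> \<in> ss_sx (delta n) k"
    then show "H k (\<xi>, replicate (Suc k) 0) = yon K n a k \<xi>" by (rule e0)
  next
    fix k \<xi> assume "\<xi> \<in> ss_sx (delta n) k"
    then show "H k (\<xi>, replicate (Suc k) 1) = yon K n b k \<xi>" by (rule e1)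
  next
    fix k \<xi> \<eta> assume "\<xi> \<in> bdry n k \<and> \<eta> \<in> ss_sx (delta 1) k"
    then show "H k (\<xi>, \<eta>) = yon K n a k \<xi>" using bd by blast
  qed
qed

end


context kan_loc begin

lemma hp_of_htpy:
  assumes a: "a \<in> S" and b: "b \<in> S" and h: "tau_htpy (th0 K) n a b"
  shows "hp a b"
proof -
  obtain H where sm: "strat_map (DD n) (th0 K) H"
    and ends: "\<And>k \<xi>. \<xi> \<in> ss_sx (delta n) k \<Longrightarrow>
            H k (\<xi>, replicate (Suc k) 0) = yon K n a k \<xi> \<and> H k (\<xi>, replicate (Suc k) 1) = yon K n b k \<xi>"
    and bd0: "\<And>k \<xi> \<eta>. \<xi> \<in> bdry n k \<Longrightarrow> \<eta> \<in> ss_sx (delta 1) k \<Longrightarrow> H k (\<xi>, \<eta>) = yon K n a k \<xi>"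
    using h unfolding tau_htpy_def th0_yon by blast
  have Hcl: "\<And>k p. p \<in> ss_sx (DD n) k \<Longrightarrow> H k p \<in> X k"
    using sm unfolding strat_map_def th0_simps by blast
  have Hact: "\<And>f k' k p. simp_op f k' k \<Longrightarrow> p \<in> ss_sx (DD n) k \<Longrightarrow>
      H k' (ss_act (DD n) f k' k p) = act f k' k (H k p)"
    using sm unfolding strat_map_def th0_simps by blast
  have bd: "H k (\<xi>, \<eta>) = star k" if "\<xi> \<in> bdry n k" "\<eta> \<in> ss_sx (delta 1) k" for k \<xi> \<eta>
    using bd0[OF that] sphere_bdry[OF a that(1)] unfolding yon_def by simp
  define E where "E j = H n ([0..<Suc n], map (\<lambda>t. if t < j then 0 else 1) [0..<Suc n])" for j :: nat
  have idn: "[0..<Suc n] \<in> ss_sx (delta n) n"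
    unfolding sx_delta by (simp del: upt_Suc)
  have mj: "map (\<lambda>t. if t < j then 0 else 1) [0..<Suc N] \<in> ss_sx (delta 1) N" for j N :: nat
    unfolding sx_delta by (auto simp: sorted_iff_nth_mono simp del: upt_Suc)
  have Emem: "([0..<Suc n], map (\<lambda>t. if t < j then 0 else 1) [0..<Suc n]) \<in> ss_sx (DD n) n" for j
    unfolding sx_D mem_Times_iff fst_conv snd_conv using idn mj by blast
  have ES: "E j \<in> S" for j
  proof -
    have "E j \<in> X n" unfolding E_def by (rule Hcl[OF Emem])
    moreover have "face i n (E j) = star m" if i: "i \<le> n" for i
    proof -
      let ?p = "([0..<Suc n], map (\<lambda>t. if t < j then 0 else 1) [0..<Suc n])"
      have "face i n (E j) = H m (ss_act (DD n) (coface i) m n ?p)"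
        unfolding E_def ss_face_def diff_Suc_1 using Hact[OF simp_op_coface[OF i] Emem] by simp
      also have "\<dots> = star m"
      proof -
        have q: "ss_act (DD n) (coface i) m n ?p =
          (map (\<lambda>t. [0..<Suc n] ! coface i t) [0..<Suc m],
           map (\<lambda>t. map (\<lambda>t. if t < j then 0 else 1) [0..<Suc n] ! coface i t) [0..<Suc m])"
          unfolding act_D by simp
        have c1: "map (\<lambda>t. [0..<Suc n] ! coface i t) [0..<Suc m] \<in> ss_sx (delta n) m"
          using delta_act_closed[OF simp_op_coface[OF i] idn] .
        have c2: "map (\<lambda>t. map (\<lambda>t. if t < j then 0 else 1) [0..<Suc n] ! coface i t) [0..<Suc m] \<in> ss_sx (delta 1) m"
          using delta_act_closed[OF simp_op_coface[OF i] mj] .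
        have nth: "\<And>t. t < Suc m \<Longrightarrow> [0..<Suc n] ! coface i t = coface i t"
          by (auto simp: coface_def nth_upt simp del: upt_Suc)
        have "i \<notin> set (map (\<lambda>t. [0..<Suc n] ! coface i t) [0..<Suc m])"
          using nth by (auto simp: coface_def simp del: upt_Suc)
        then have "map (\<lambda>t. [0..<Suc n] ! coface i t) [0..<Suc m] \<in> bdry n m"
          unfolding bdry_def using c1 i by auto
        then show ?thesis unfolding q using bd c2 by simp
      qed
      finally show ?thesis .
    qed
    ultimately show ?thesis unfolding S_iff by simp
  qed
  have E0: "E 0 = b"
  proof -
    have "map (\<lambda>t. if t < 0 then 0 else 1) [0..<Suc n] = replicate (Suc n) (1::nat)"
      by (simp add: map_replicate_const del: upt_Suc)
    then have "E 0 = yon K n b n [0..<Suc n]" unfolding E_def using ends[OF idn] by simp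
    also have "\<dots> = b" unfolding yon_def
      by (rule act_id) (use b S_iff in \<open>auto simp: nth_upt simp del: upt_Suc\<close>)
    finally show ?thesis .
  qed
  have En: "E (Suc n) = a"
  proof -
    have "map (\<lambda>t. if t < Suc n then 0 else 1) [0..<Suc n] = map (\<lambda>t. 0::nat) [0..<Suc n]"
      by (rule map_cong) (auto simp del: upt_Suc)
    also have "\<dots> = replicate (Suc n) (0::nat)"
      by (simp only: map_replicate_const length_upt) simp
    finally have "map (\<lambda>t. if t < Suc n then 0 else 1) [0..<Suc n] = replicate (Suc n) (0::nat)" .
    then have "E (Suc n) = yon K n a n [0..<Suc n]" unfolding E_def using ends[OF idn] by simp
    also have "\<dots> = a" unfolding yon_def
      by (rule act_id) (use a S_iff in \<open>auto simp: nth_upt simp del: upt_Suc\<close>)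
    finally show ?thesis .
  qed
  have R: "Rj j (E j) (E (Suc j))" if j: "j \<le> n" for j
  proof -
    define c where "c = (map (codeg j) [0..<Suc (Suc n)], map (\<lambda>t. if t \<le> j then 0 else (1::nat)) [0..<Suc (Suc n)])"
    have cmem: "c \<in> ss_sx (DD n) (Suc n)"
      unfolding c_def sx_D sx_delta using j
      by (auto simp: sorted_iff_nth_mono codeg_def simp del: upt_Suc)
    have tab: "face i (Suc n) (H (Suc n) c) = (if i = j then E j else if i = Suc j then E (Suc j) else star n)"
      if i: "i \<le> Suc n" for i
    proof -
      have f: "face i (Suc n) (H (Suc n) c) = H n (ss_act (DD n) (coface i) n (Suc n) c)"
        unfolding ss_face_def diff_Suc_1 using Hact[OF simp_op_coface[OF i] cmem] by simp
      have q: "ss_act (DD n) (coface i) n (Suc n) c =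
          (map (\<lambda>t. codeg j (coface i t)) [0..<Suc n], map (\<lambda>t. if coface i t \<le> j then 0 else 1) [0..<Suc n])"
        unfolding act_D c_def using i by (auto simp: coface_def nth_upt simp del: upt_Suc)
      have qmem: "ss_act (DD n) (coface i) n (Suc n) c \<in> ss_sx (DD n) n"
        using delta_act_closed[OF simp_op_coface[OF i]] cmem unfolding sx_D act_D by auto
      show ?thesis
      proof (cases "i = j \<or> i = Suc j")
        case True
        have l1: "map (\<lambda>t. codeg j (coface i t)) [0..<Suc n] = [0..<Suc n]"
          by (rule map_idI) (use True in \<open>auto simp: codeg_def coface_def\<close>)
        show ?thesis
        proof (cases "i = j")
          case True
          have mm: "map (\<lambda>t. if coface i t \<le> j then 0 else 1) [0..<Suc n] = map (\<lambda>t. if t < j then 0 else 1) [0..<Suc n]"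
            by (rule map_cong) (use True in \<open>auto simp: coface_def\<close>)
          show ?thesis unfolding f q l1 E_def mm using True by (simp del: upt_Suc)
        next
          case False
          then have ij: "i = Suc j" using \<open>i = j \<or> i = Suc j\<close> by simp
          have mm: "map (\<lambda>t. if coface i t \<le> j then 0 else 1) [0..<Suc n] = map (\<lambda>t. if t < Suc j then 0 else 1) [0..<Suc n]"
            by (rule map_cong) (use ij in \<open>auto simp: coface_def\<close>)
          show ?thesis unfolding f q l1 E_def mm using ij by (simp del: upt_Suc)
        qed
      next
        case False
        define qq where "qq = (if i < j then i else i - 1)"
        have qq: "qq \<le> n" unfolding qq_def using i j by auto
        have nq: "qq \<notin> set (map (\<lambda>t. codeg j (coface i t)) [0..<Suc n])"
          using False unfolding qq_def by (auto simp: codeg_def coface_def simp del: upt_Suc split: if_splits)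
        have m1: "map (\<lambda>t. codeg j (coface i t)) [0..<Suc n] \<in> bdry n n"
          using qmem nq qq unfolding q sx_D bdry_def by auto
        have m2: "map (\<lambda>t. if coface i t \<le> j then 0 else 1) [0..<Suc n] \<in> ss_sx (delta 1) n"
          using qmem unfolding q sx_D by auto
        show ?thesis unfolding f q using bd[OF m1 m2] False by (simp del: upt_Suc)
      qed
    qed
    have "H (Suc n) c \<in> X (Suc n)" by (rule Hcl[OF cmem])
    then show ?thesis unfolding Rj_def using tab by blast
  qed
  have step: "hp (E j) (E (Suc j))" if "j \<le> n" for j
    using Rj_hp[OF that ES R[OF that]] .
  have chain: "j \<le> Suc n \<Longrightarrow> hp (E 0) (E j)" for j
  proof (induction j)
    case 0 show ?case by (rule hp_refl[OF ES])
  next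
    case (Suc j)
    then have "hp (E 0) (E j)" "hp (E j) (E (Suc j))" using step by auto
    then show ?case using hp_trans[OF ES] by blast
  qed
  have "hp b a" using chain[of "Suc n"] E0 En by simp
  then show ?thesis using hp_sym[OF b] by blast
qed

end


lemma group_transfer:
  assumes g: "group G" and c: "carrier H = carrier G" and o: "one H = one G"
    and mm: "\<And>a b. a \<in> carrier H \<Longrightarrow> b \<in> carrier H \<Longrightarrow> mult H a b = mult G a b"
  shows "group H"
proof (rule groupI)
  fix x y assume "x \<in> carrier H" "y \<in> carrier H"
  then show "mult H x y \<in> carrier H" using mm c group.is_monoid[OF g] monoid.m_closed by fastforce
next
  show "one H \<in> carrier H" using c o group.is_monoid[OF g] monoid.one_closed by fastforce
next
  fix x y z assume xyz: "x \<in> carrier H" "y \<in> carrier H" "z \<in> carrier H"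
  have cl: "mult G x y \<in> carrier G" "mult G y z \<in> carrier G"
    using xyz c group.is_monoid[OF g] monoid.m_closed by fastforce+
  then show "mult H (mult H x y) z = mult H x (mult H y z)"
    using xyz c mm monoid.m_assoc[OF group.is_monoid[OF g]] by simp
next
  fix x assume "x \<in> carrier H"
  then show "mult H (one H) x = x"
    using c o mm monoid.l_one[OF group.is_monoid[OF g]] monoid.one_closed[OF group.is_monoid[OF g]] by simp
next
  fix x assume x: "x \<in> carrier H"
  then obtain y where "y \<in> carrier G" "mult G y x = one G" using group.l_inv_ex[OF g] c by blast
  then show "\<exists>y\<in>carrier H. mult H y x = one H" using x c o mm by auto
qed

context kan_loc begin

lemma tau_cls_eq: "a \<in> S \<Longrightarrow> tau_cls (th0 K) v n a = cls a"
  unfolding tau_cls_def pi_cls_def tau_sphere_eq using htpy_of_hp hp_of_htpy by blast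

lemma main_loc:
  "group (tau_monoid (th0 K) v n) \<and>
         carrier (tau_monoid (th0 K) v n) = carrier (pi_group K v n) \<and>
         one (tau_monoid (th0 K) v n) = one (pi_group K v n) \<and>
         (\<forall>A\<in>carrier (tau_monoid (th0 K) v n). \<forall>B\<in>carrier (tau_monoid (th0 K) v n).
             mult (tau_monoid (th0 K) v n) A B = mult (pi_group K v n) A B)"
proof -
  have car: "carrier (tau_monoid (th0 K) v n) = carrier G"
  proof -
    have "carrier (tau_monoid (th0 K) v n) = tau_cls (th0 K) v n ` S"
      unfolding tau_monoid_def tau_sphere_eq by simp
    also have "\<dots> = cls ` S" using tau_cls_eq by (rule image_cong[OF refl])
    also have "\<dots> = carrier G" unfolding pi_group_def by simp
    finally show ?thesis .
  qed
  have one: "one (tau_monoid (th0 K) v n) = one G"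
    unfolding tau_monoid_def pi_group_def using tau_cls_eq[OF star_S] by simp
  have sub: "A \<subseteq> S" if "A \<in> carrier G" for A
    using that unfolding pi_group_def pi_cls_def by auto
  have mult: "mult (tau_monoid (th0 K) v n) A B = mult G A B"
    if A: "A \<in> carrier G" and B: "B \<in> carrier G" for A B
  proof -
    have AS: "A \<subseteq> S" and BS: "B \<subseteq> S" using sub A B by auto
    have eq: "(\<exists>\<alpha>\<in>A. \<exists>\<beta>\<in>B. \<exists>\<theta>. tau_witness (th0 K) v n \<alpha> \<beta> \<theta> \<and>
                 C = tau_cls (th0 K) v n (ss_face (th0 K) n (Suc n) \<theta>)) \<longleftrightarrow>
              (\<exists>x\<in>A. \<exists>y\<in>B. \<exists>z\<in>X (Suc n).
                 (\<forall>i<n - 1. face i (Suc n) z = star n) \<and>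
                 face (n - 1) (Suc n) z = x \<and> face (Suc n) (Suc n) z = y \<and>
                 C = cls (face n (Suc n) z))" for C
    proof
      assume "\<exists>\<alpha>\<in>A. \<exists>\<beta>\<in>B. \<exists>\<theta>. tau_witness (th0 K) v n \<alpha> \<beta> \<theta> \<and>
                 C = tau_cls (th0 K) v n (ss_face (th0 K) n (Suc n) \<theta>)"
      then obtain \<alpha> \<beta> \<theta> where ab: "\<alpha> \<in> A" "\<beta> \<in> B" and w: "tau_witness (th0 K) v n \<alpha> \<beta> \<theta>"
        and C: "C = tau_cls (th0 K) v n (face n (Suc n) \<theta>)" by auto
      have w': "\<theta> \<in> X (Suc n)" "face m (Suc n) \<theta> = \<alpha>" "face (Suc n) (Suc n) \<theta> = \<beta>"
        "\<forall>i<m. face i (Suc n) \<theta> = star n" using w witness_iff by auto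
      have "prodrel \<alpha> \<beta> (face n (Suc n) \<theta>)" unfolding prodrel_iff using w' by blast
      then have "face n (Suc n) \<theta> \<in> S" using prod_S ab AS BS by blast
      then have "C = cls (face n (Suc n) \<theta>)" using C tau_cls_eq by simp
      then show "\<exists>x\<in>A. \<exists>y\<in>B. \<exists>z\<in>X (Suc n).
                 (\<forall>i<n - 1. face i (Suc n) z = star n) \<and>
                 face (n - 1) (Suc n) z = x \<and> face (Suc n) (Suc n) z = y \<and>
                 C = cls (face n (Suc n) z)" using ab w' by auto
    next
      assume "\<exists>x\<in>A. \<exists>y\<in>B. \<exists>z\<in>X (Suc n).
                 (\<forall>i<n - 1. face i (Suc n) z = star n) \<and>
                 face (n - 1) (Suc n) z = x \<and> face (Suc n) (Suc n) z = y \<and>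
                 C = cls (face n (Suc n) z)"
      then obtain x y z where ab: "x \<in> A" "y \<in> B" and z: "z \<in> X (Suc n)"
        "\<forall>i<m. face i (Suc n) z = star n" "face m (Suc n) z = x" "face (Suc n) (Suc n) z = y"
        and C: "C = cls (face n (Suc n) z)" by auto
      have w: "tau_witness (th0 K) v n x y z" using z witness_iff by auto
      have "prodrel x y (face n (Suc n) z)" unfolding prodrel_iff using z by blast
      then have "face n (Suc n) z \<in> S" using prod_S ab AS BS by blast
      then have "C = tau_cls (th0 K) v n (face n (Suc n) z)" using C tau_cls_eq by simp
      then show "\<exists>\<alpha>\<in>A. \<exists>\<beta>\<in>B. \<exists>\<theta>. tau_witness (th0 K) v n \<alpha> \<beta> \<theta> \<and>
                 C = tau_cls (th0 K) v n (ss_face (th0 K) n (Suc n) \<theta>)" using ab w by auto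
    qed
    show ?thesis unfolding tau_monoid_def pi_group_def monoid.simps eq ..
  qed
  have grp: "group (tau_monoid (th0 K) v n)"
    using group_transfer[OF group_G car one] mult car by simp
  show ?thesis using grp car one mult by simp
qed

end

theorem mainTheorem5:
  fixes K :: "'a sset" and v :: 'a and n :: nat
  assumes "kan_complex K" and "v \<in> ss_sx K 0" and "1 \<le> n"
  shows "group (tau_monoid (th0 K) v n) \<and>
         carrier (tau_monoid (th0 K) v n) = carrier (pi_group K v n) \<and>
         one (tau_monoid (th0 K) v n) = one (pi_group K v n) \<and>
         (\<forall>A\<in>carrier (tau_monoid (th0 K) v n). \<forall>B\<in>carrier (tau_monoid (th0 K) v n).
             mult (tau_monoid (th0 K) v n) A B = mult (pi_group K v n) A B)"
proof -
  obtain m where nm: "n = Suc m" using assms(3) by (cases n) auto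
  have "kan_loc K v" unfolding kan_loc_def using assms(1,2) by simp
  then show ?thesis unfolding nm by (rule kan_loc.main_loc)
qed


end
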